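(* Let $k\ge 2$, let $U$ be any rotation of a binary de Bruijn cycle of order $k$, and let $w_{\mathrm{lin}}=U\,U[0..k-2]$ (a word of length $2^k+k-1$). Then the size of a smallest suffixient set for $w_{\mathrm{lin}}\$$ is $2^k+1$.
   Context: A binary de Bruijn cycle of order $k$ is a cyclic word $C$ of length $2^k$ over $\{0,1\}$ such that every word of $\{0,1\}^k$ occurs exactly once as a cyclic length-$k$ window of $C$. Strings are $0$-indexed; $w[i..j]$ is the substring from $i$ to $j$ inclusive. $\$$ is an end-marker not in $\{0,1\}$, occurring once at the end. For a string $v$ (over $\{0,1,\$\}$), a substring $x$ (possibly empty) is right-maximal if $xa$ and $xb$ are substrings of $v$ for two distinct symbols $a\ne b$; these words $xa$ are the right-extensions of $v$. A set $S$ of positions of $v$ is suffixient for $v$ if every right-extension of $v$ is a suffix of $v[0..j]$ for some $j\in S$. *)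

theory Defs
  imports Main "HOL-Library.Sublist"
begin

definition end_marker :: nat where "end_marker = 2"

definition binary_word :: "nat list \<Rightarrow> bool" where
  "binary_word w \<longleftrightarrow> set w \<subseteq> {0, 1}"

definition cyc_window :: "nat list \<Rightarrow> nat \<Rightarrow> nat \<Rightarrow> nat list" where
  "cyc_window C k i = map (\<lambda>j. C ! ((i + j) mod length C)) [0..<k]"

definition de_bruijn_cycle :: "nat \<Rightarrow> nat list \<Rightarrow> bool" where
  "de_bruijn_cycle k C \<longleftrightarrow> length C = 2 ^ k \<and> binary_word C \<and>
     (\<forall>w. length w = k \<and> binary_word w \<longrightarrow>
        card {i. i < length C \<and> cyc_window C k i = w} = 1)"

definition right_maximal :: "'a list \<Rightarrow> 'a list \<Rightarrow> bool" where
  "right_maximal x v \<longleftrightarrow> (\<exists>a b. a \<noteq> b \<and> sublist (x @ [a]) v \<and> sublist (x @ [b]) v)"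

definition right_extensions :: "'a list \<Rightarrow> 'a list set" where
  "right_extensions v = {x @ [a] | x a. right_maximal x v \<and> sublist (x @ [a]) v}"

definition suffixient :: "nat set \<Rightarrow> 'a list \<Rightarrow> bool" where
  "suffixient S v \<longleftrightarrow> S \<subseteq> {..<length v} \<and>
     (\<forall>y \<in> right_extensions v. \<exists>j \<in> S. suffix y (take (Suc j) v))"

end

theory Submission
  imports Defs
begin

lemma sublist_iff_pos:
  "sublist y xs \<longleftrightarrow> (\<exists>p. p + length y \<le> length xs \<and> take (length y) (drop p xs) = y)"
proof
  assume "sublist y xs"
  then obtain ps ss where "xs = ps @ y @ ss" by (auto simp: sublist_def)
  then show "\<exists>p. p + length y \<le> length xs \<and> take (length y) (drop p xs) = y"
    by (intro exI[of _ "length ps"]) auto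
next
  assume "\<exists>p. p + length y \<le> length xs \<and> take (length y) (drop p xs) = y"
  then obtain p where p: "p + length y \<le> length xs" "take (length y) (drop p xs) = y" by blast
  have "xs = take p xs @ take (length y) (drop p xs) @ drop (length y) (drop p xs)"
    by (simp only: append_take_drop_id)
  then show "sublist y xs" unfolding sublist_def using p(2) by metis
qed

lemma suffix_take_iff:
  assumes "n \<le> length xs"
  shows "suffix y (take n xs) \<longleftrightarrow> (length y \<le> n \<and> take (length y) (drop (n - length y) xs) = y)"
proof
  assume "suffix y (take n xs)"
  then obtain us where us: "take n xs = us @ y" by (auto simp: suffix_def)
  then have l: "length us + length y = n" using assms by (metis length_append length_take min_absorb2)
  have "drop (length us) (take n xs) = y" using us by simp
  then have "take (n - length us) (drop (length us) xs) = y" by (simp add: drop_take)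
  then show "length y \<le> n \<and> take (length y) (drop (n - length y) xs) = y"
    using l by (metis add_diff_cancel_left' add_diff_cancel_right' le_add2)
next
  assume a: "length y \<le> n \<and> take (length y) (drop (n - length y) xs) = y"
  have "take n xs = take (n - length y) xs @ drop (n - length y) (take n xs)"
    by (metis append_take_drop_id take_take min_absorb1 diff_le_self)
  also have "drop (n - length y) (take n xs) = take (length y) (drop (n - length y) xs)"
    using a by (simp add: drop_take)
  finally show "suffix y (take n xs)" using a by (metis suffix_def)
qed

lemma mod_cancel_lt:
  fixes i i' r L :: nat
  assumes "i < L" "i' < L" "(i + r) mod L = (i' + r) mod L"
  shows "i = i'"
proof -
  have L: "L > 0" using assms by simp
  define s where "s = r mod L"
  have s: "s < L" using L s_def by simp
  have "(i + s) mod L = (i' + s) mod L" using assms(3) unfolding s_def by (metis mod_add_right_eq)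
  then show ?thesis using assms(1,2) s by (auto simp: mod_if split: if_splits)
qed

theorem lemma4:
  fixes k r :: nat and C :: "nat list"
  assumes "k \<ge> 2" and "de_bruijn_cycle k C"
  defines "U \<equiv> rotate r C"
  defines "w_lin \<equiv> U @ take (k - 1) U"
  shows "(\<exists>S. suffixient S (w_lin @ [end_marker]) \<and> card S = 2 ^ k + 1) \<and>
         (\<forall>S. suffixient S (w_lin @ [end_marker]) \<longrightarrow> card S \<ge> 2 ^ k + 1)"
proof -
  define L where "L = (2::nat) ^ k"
  define W where "W = w_lin @ [end_marker]"
  have db: "length C = L" "binary_word C"
    "\<And>w. length w = k \<Longrightarrow> binary_word w \<Longrightarrow> card {i. i < L \<and> cyc_window C k i = w} = 1"
    using assms(2) unfolding de_bruijn_cycle_def L_def by auto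
  have kL: "k < L" unfolding L_def by simp
  have k1: "k \<ge> 1" using assms(1) by simp
  have lenU: "length U = L" using db U_def by simp
  have lenW: "length W = L + k" using lenU kL k1 unfolding W_def w_lin_def by simp
  have Wnth: "W ! m = C ! ((m + r) mod L)" if "m < L + k - 1" for m
  proof (cases "m < L")
    case True
    then have "W ! m = U ! m" unfolding W_def w_lin_def using lenU by (simp add: nth_append)
    then show ?thesis using True db(1) U_def by (simp add: nth_rotate add.commute)
  next
    case False
    have mL: "m - L < k - 1" using False that by linarith
    then have "W ! m = U ! (m - L)" unfolding W_def w_lin_def using lenU that kL False
      by (simp add: nth_append)
    also have "\<dots> = C ! ((r + (m - L)) mod L)" using db(1) U_def kL that False
      by (simp add: nth_rotate)
    also have "(r + (m - L)) mod L = (m + r) mod L"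
    proof -
      have h: "m + r = (r + (m - L)) + L" using False by simp
      show ?thesis unfolding h mod_add_self2 ..
    qed
    finally show ?thesis .
  qed
  have Wlast: "W ! (L + k - 1) = 2"
  proof -
    have "W \<noteq> []" unfolding W_def by simp
    then have "W ! (length W - 1) = last W" by (simp add: last_conv_nth)
    moreover have "last W = 2" unfolding W_def end_marker_def by simp
    ultimately show ?thesis using lenW by simp
  qed
  have Cbin: "C ! q \<in> {0, 1}" if "q < L" for q
    using db(1,2) that unfolding binary_word_def by (metis nth_mem subsetD)
  have Wbin: "W ! m \<in> {0, 1}" if "m < L + k - 1" for m
  proof -
    have "(m + r) mod L < L" using kL by simp
    then show ?thesis using Wnth[OF that] Cbin by simp
  qed
  have Wnot2: "W ! m \<noteq> 2" if "m < L + k - 1" for m using Wbin[OF that] by auto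
  have win: "take k (drop i W) = cyc_window C k ((i + r) mod L)" if "i < L" for i
  proof (rule nth_equalityI)
    show "length (take k (drop i W)) = length (cyc_window C k ((i + r) mod L))"
      using lenW that by (simp add: cyc_window_def)
  next
    fix j assume "j < length (take k (drop i W))"
    then have j: "j < k" using lenW that by simp
    have "take k (drop i W) ! j = W ! (i + j)" using j lenW that by simp
    also have "\<dots> = C ! ((i + j + r) mod L)" using Wnth j that by simp
    also have "(i + j + r) mod L = ((i + r) mod L + j) mod L"
    proof -
      have "((i + r) mod L + j) mod L = (i + r + j) mod L" by (rule mod_add_left_eq)
      moreover have "i + r + j = i + j + r" by simp
      ultimately show ?thesis by simp
    qed
    finally show "take k (drop i W) ! j = cyc_window C k ((i + r) mod L) ! j"
      using j db(1) by (simp add: cyc_window_def)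
  qed
  have cyc_uniq: "a = b" if "a < L" "b < L" "cyc_window C k a = cyc_window C k b" for a b
  proof -
    define v where "v = cyc_window C k a"
    have lv: "length v = k" unfolding v_def cyc_window_def by simp
    have "set v \<subseteq> set C"
    proof
      fix x assume "x \<in> set v"
      then obtain j where "x = C ! ((a + j) mod length C)" unfolding v_def cyc_window_def by auto
      moreover have "(a + j) mod length C < length C" using db(1) kL by simp
      ultimately show "x \<in> set C" by simp
    qed
    then have bv: "binary_word v" using db(2) unfolding binary_word_def by blast
    have "card {i. i < L \<and> cyc_window C k i = v} = Suc 0" using db(3)[OF lv bv] by simp
    then obtain c where c: "{i. i < L \<and> cyc_window C k i = v} = {c}" unfolding card_1_singleton_iff by blast
    have "a \<in> {i. i < L \<and> cyc_window C k i = v}" using that v_def by simp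
    then have "a = c" using c by simp
    moreover have "b \<in> {i. i < L \<and> cyc_window C k i = v}" using that v_def by simp
    then have "b = c" using c by simp
    ultimately show ?thesis by simp
  qed
  have cyc_ex: "\<exists>a<L. cyc_window C k a = v" if "length v = k" "binary_word v" for v
  proof -
    have "card {i. i < L \<and> cyc_window C k i = v} = 1" using db(3)[OF that] .
    then have "{i. i < L \<and> cyc_window C k i = v} \<noteq> {}" by force
    then show ?thesis by blast
  qed
  have win_uniq: "i = i'" if "i < L" "i' < L" "take k (drop i W) = take k (drop i' W)" for i i'
  proof -
    have "cyc_window C k ((i+r) mod L) = cyc_window C k ((i'+r) mod L)" using win that by metis
    moreover have "(i+r) mod L < L" "(i'+r) mod L < L" using kL by simp_all
    ultimately have "(i+r) mod L = (i'+r) mod L" using cyc_uniq by blast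
    then show ?thesis using mod_cancel_lt that(1,2) by blast
  qed
  have win_ex: "\<exists>i<L. take k (drop i W) = v" if vv: "length v = k" "binary_word v" for v
  proof -
    obtain a where a: "a < L" "cyc_window C k a = v" using cyc_ex[OF vv] by blast
    define i where "i = (a + (L - r mod L)) mod L"
    have Lp: "L > 0" using kL by simp
    have "(i + r) mod L = (a + (L - r mod L) + r) mod L" unfolding i_def by (simp add: mod_add_left_eq)
    also have "a + (L - r mod L) + r = a + L * (r div L + 1)"
    proof -
      have e: "r mod L + L * (r div L) = r" by simp
      have rm: "r mod L < L" using Lp by simp
      have "a + (L - r mod L) + r = a + (L + L * (r div L))" using e rm by linarith
      then show ?thesis by (simp add: algebra_simps)
    qed
    also have "(a + L * (r div L + 1)) mod L = a mod L"
      by (simp only: mod_mult_self1 mod_mult_self2 mod_mult_self3 mod_mult_self4)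
    also have "a mod L = a" using a(1) by simp
    finally have "(i + r) mod L = a" .
    moreover have "i < L" unfolding i_def using Lp by simp
    ultimately show ?thesis using win a by metis
  qed

  have binpos: "set y \<subseteq> {0, 1}" if "take n (drop p W) = y" "p + n \<le> L + k - 1" for y n p
  proof
    fix x assume "x \<in> set y"
    then obtain j where j: "j < length y" "x = y ! j" by (auto simp: in_set_conv_nth)
    have ln: "length y \<le> n" using that(1) by auto
    have "y ! j = W ! (p + j)" using that j ln lenW by auto
    then show "x \<in> {0, 1}" using Wbin[of "p + j"] j ln that(2) by simp
  qed
  have posend: "p + length y \<le> L + k - 1"
    if "y \<noteq> []" "take (length y) (drop p W) = y" "p + length y \<le> L + k" "2 \<notin> set y" for y p
  proof (rule ccontr)
    assume "\<not> p + length y \<le> L + k - 1"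
    then have e: "p + length y = L + k" using that(3) by simp
    have "y ! (length y - 1) = take (length y) (drop p W) ! (length y - 1)" using that(2) by simp
    also have "\<dots> = W ! (p + (length y - 1))" using that(1,3) lenW by simp
    also have "p + (length y - 1) = L + k - 1" using e that(1) by (cases y) auto
    finally have "y ! (length y - 1) = 2" using Wlast by simp
    moreover have "y ! (length y - 1) \<in> set y" using that(1) by simp
    ultimately show False using that(4) by simp
  qed
  have sub1: "sublist [x] W" if xW: "x \<in> set W" for x
  proof -
    obtain ps ss where "W = ps @ x # ss" using split_list[OF xW] by blast
    then show ?thesis unfolding sublist_def by (metis append_Cons append_Nil)
  qed
  have lenwin: "length (take k (drop i W)) = k" if "i < L" for i using that lenW by simp
  have subwin: "sublist (take k (drop i W)) W" if "i < L" for i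
    unfolding sublist_iff_pos using that lenW lenwin[OF that] by (intro exI[of _ i]) simp
  have lower: "card S \<ge> L + 1" if suff: "suffixient S W" for S
  proof -
    have SW: "S \<subseteq> {..<length W}" and ext: "\<And>y. y \<in> right_extensions W \<Longrightarrow> \<exists>j\<in>S. suffix y (take (Suc j) W)"
      using suff unfolding suffixient_def by auto
    have Sfin: "finite S" using SW finite_subset by blast
    have Sj: "j \<in> S" if jr: "k - 1 \<le> j" "j \<le> L + k - 1" for j
    proof (cases "j = L + k - 1")
      case True
      obtain i where i: "i < L" "take k (drop i W) = replicate k 0"
      proof -
        have "binary_word (replicate k (0::nat))" unfolding binary_word_def by auto
        then show ?thesis using win_ex[of "replicate k 0"] that by auto
      qed
      have "0 \<in> set (take k (drop i W))" using i k1 by simp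
      then have "0 \<in> set W" by (meson in_set_dropD in_set_takeD)
      moreover have "2 \<in> set W" unfolding W_def end_marker_def by simp
      ultimately have "right_maximal [] W" unfolding right_maximal_def
        by (intro exI[of _ 0] exI[of _ 2]) (simp add: sub1)
      then have "[2] \<in> right_extensions W" unfolding right_extensions_def
        using sub1[OF \<open>2 \<in> set W\<close>] by force
      then obtain j' where j': "j' \<in> S" "suffix [2] (take (Suc j') W)" using ext by blast
      have j'l: "j' < L + k" using j' SW lenW by auto
      then have "take 1 (drop j' W) = [2]" using j'(2) suffix_take_iff[of "Suc j'" W "[2]"] lenW by simp
      moreover have "drop j' W = W ! j' # drop (Suc j') W"
        using j'l lenW by (simp add: Cons_nth_drop_Suc)
      ultimately have "W ! j' = 2" by simp
      then have "j' = L + k - 1" using Wnot2[of j'] j'l by (cases "j' < L + k - 1") auto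
      then show ?thesis using True j' by simp
    next
      case False
      define i where "i = j + 1 - k"
      have iL: "i < L" and ji: "j = i + k - 1" using jr False k1 unfolding i_def by auto
      define v where "v = take k (drop i W)"
      have lv: "length v = k" using lenwin[OF iL] v_def by simp
      have bv: "set v \<subseteq> {0, 1}" using binpos[of k i v] iL v_def by simp
      have vne: "v \<noteq> []" using lv k1 by auto
      have "set (butlast v) \<subseteq> {0, 1}" using bv by (meson in_set_butlastD subset_iff)
      then have b0: "binary_word (butlast v @ [0])" "binary_word (butlast v @ [1])"
        unfolding binary_word_def by auto
      have l0: "length (butlast v @ [0::nat]) = k" "length (butlast v @ [1::nat]) = k"
        using lv k1 by auto
      have s0: "sublist (butlast v @ [0]) W" using win_ex[OF l0(1) b0(1)] subwin by metis
      have s1: "sublist (butlast v @ [1]) W" using win_ex[OF l0(2) b0(2)] subwin by metis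
      have rm: "right_maximal (butlast v) W" unfolding right_maximal_def
        using s0 s1 by (intro exI[of _ "0::nat"] exI[of _ "1::nat"]) simp
      have "v = butlast v @ [last v]" using vne by simp
      then have "v \<in> right_extensions W" unfolding right_extensions_def
        using rm subwin[OF iL] v_def by force
      then obtain j' where j': "j' \<in> S" "suffix v (take (Suc j') W)" using ext by blast
      have j'l: "j' < L + k" using j' SW lenW by auto
      have kj: "k \<le> Suc j'" and pv: "take k (drop (Suc j' - k) W) = v"
        using j'(2) suffix_take_iff[of "Suc j'" W v] lenW j'l lv by auto
      have v2: "2 \<notin> set v" using bv by auto
      have "Suc j' - k + k \<le> L + k - 1"
        using posend[of v "Suc j' - k"] vne pv lv kj j'l v2 by simp
      then have pL: "Suc j' - k < L" using k1 by linarith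
      have "Suc j' - k = i" using win_uniq[OF pL iL] pv v_def by simp
      then have "j' = j" using ji kj k1 by linarith
      then show ?thesis using j' by simp
    qed
    have "{k - 1 .. L + k - 1} \<subseteq> S" using Sj by auto
    then have "card {k - 1 .. L + k - 1} \<le> card S" using Sfin card_mono by blast
    moreover have "card {k - 1 .. L + k - 1} = L + 1" using k1 by simp
    ultimately show ?thesis by simp
  qed
  define S0 where "S0 = {k - 1 .. L + k - 1}"
  have cardS0: "card S0 = L + 1" using k1 unfolding S0_def by simp
  have sufS0: "suffixient S0 W" unfolding suffixient_def
  proof (intro conjI ballI)
    show "S0 \<subseteq> {..<length W}" unfolding S0_def using lenW k1 by auto
  next
    fix y assume "y \<in> right_extensions W"
    then obtain x a where y: "y = x @ [a]" and rmx: "right_maximal x W" and sy: "sublist (x @ [a]) W"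
      unfolding right_extensions_def by blast
    obtain p where p: "p + length y \<le> length W" "take (length y) (drop p W) = y"
      using sy y sublist_iff_pos by metis
    have yne: "y \<noteq> []" using y by simp
    show "\<exists>j\<in>S0. suffix y (take (Suc j) W)"
    proof (cases "2 \<in> set y")
      case True
      have "p + length y = L + k"
      proof (rule ccontr)
        assume "p + length y \<noteq> L + k"
        then have "p + length y \<le> L + k - 1" using p lenW by simp
        then have "set y \<subseteq> {0, 1}" using binpos p(2) by blast
        then show False using True by auto
      qed
      then have pe: "p = L + k - length y" by simp
      have "suffix y (take (Suc (L + k - 1)) W)"
        using suffix_take_iff[of "L + k" W y] lenW p k1 unfolding pe by simp
      moreover have "L + k - 1 \<in> S0" unfolding S0_def by simp
      ultimately show ?thesis by blast
    next
      case False
      have "p + length y \<le> L + k - 1" using posend[OF yne] p False lenW by simp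
      then have ybin: "set y \<subseteq> {0, 1}" using binpos p(2) by blast
      have "length x < k"
      proof (rule ccontr)
        assume "\<not> length x < k"
        then have xk: "k \<le> length x" by simp
        obtain a' b' where ab: "a' \<noteq> b'" "sublist (x @ [a']) W" "sublist (x @ [b']) W"
          using rmx unfolding right_maximal_def by blast
        obtain p1 where p1: "p1 + length x + 1 \<le> length W" "take (length x + 1) (drop p1 W) = x @ [a']"
          using ab(2) sublist_iff_pos[of "x @ [a']" W] by auto
        obtain p2 where p2: "p2 + length x + 1 \<le> length W" "take (length x + 1) (drop p2 W) = x @ [b']"
          using ab(3) sublist_iff_pos[of "x @ [b']" W] by auto
        have t1: "take k (drop p1 W) = take k x"
        proof -
          have "take k (drop p1 W) = take k (take (length x + 1) (drop p1 W))" using xk by simp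
          also have "\<dots> = take k (x @ [a'])" using p1(2) by simp
          finally show ?thesis using xk by simp
        qed
        have t2: "take k (drop p2 W) = take k x"
        proof -
          have "take k (drop p2 W) = take k (take (length x + 1) (drop p2 W))" using xk by simp
          also have "\<dots> = take k (x @ [b'])" using p2(2) by simp
          finally show ?thesis using xk by simp
        qed
        have "p1 < L" "p2 < L" using p1(1) p2(1) xk lenW by linarith+
        then have "p1 = p2" using win_uniq t1 t2 by simp
        then have "x @ [a'] = x @ [b']" using p1(2) p2(2) by simp
        then show False using ab(1) by simp
      qed
      then have ly: "length y \<le> k" using y by simp
      define z where "z = replicate (k - length y) 0 @ y"
      have lz: "length z = k" using ly z_def by simp
      have bz: "binary_word z" unfolding binary_word_def z_def using ybin by auto
      obtain i where i: "i < L" "take k (drop i W) = z" using win_ex[OF lz bz] by blast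
      have "drop (k - length y) z = y" unfolding z_def by simp
      then have "drop (k - length y) (take k (drop i W)) = y" using i by simp
      then have "take (length y) (drop (i + k - length y) W) = y"
        using ly by (simp add: drop_take add.commute)
      then have "suffix y (take (i + k) W)"
        using suffix_take_iff[of "i + k" W y] lenW i(1) ly by simp
      moreover have "Suc (i + k - 1) = i + k" using k1 by simp
      moreover have "i + k - 1 \<in> S0" unfolding S0_def using i(1) k1 by auto
      ultimately show ?thesis by metis
    qed
  qed
  show ?thesis using lower sufS0 cardS0 unfolding W_def L_def by auto
qed

end
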